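(* Let $(X,d,m)$ be a metric measure space with a metric measure foliation, with quotient $(X^*,d^*,m^* )$, quotient map $p$, and canonical disintegration $\{\mu_y\}_{y\in X^*}$. For $\nu\in\mathcal P(X^* )$ define $p^*\nu\in\mathcal P(X)$ by $p^*\nu(A)=\int_{X^*}\mu_y(A)\,d\nu(y)$ for Borel $A\subset X$. Then for every $\nu\in\mathcal P(X^* )$: (1) $p_*(p^*\nu)=\nu$; (2) if $\nu=\rho m^*$ for a Borel function $\rho$, then $p^*\nu=(\rho\circ p)m$; (3) if $\nu$ is absolutely continuous with respect to $m^*$, then $\mathrm{Ent}_{m^*}(\nu)=\mathrm{Ent}_m(p^*\nu)$.
   Context: A metric measure space $(X,d,m)$: complete separable metric space with Borel measure satisfying $0<m(B_r(x))<\infty$ for all $x$, $r>0$. A metric foliation is a family $\mathcal F$ of pairwise disjoint closed sets covering $X$ with $d(F,F')=d(x,F')$ for $F,F'\in\mathcal F$, $x\in F$; quotient $X^*$, quotient map $p$, $d^*(y,y')=d(p^{-1}(y),p^{-1}(y'))$, $m^*=p_*m$. With $\{\mu_y\}$ a disintegration of $m$ for $p$, $\mathcal F$ is a metric measure foliation if $m^*$ is locally finite and there is Borel $\Omega$ of full $m^*$-measure with $W_2(\mu_y,\mu_{y'})=d^*(y,y')$ for $y,y'\in\Omega$. The canonical disintegration is a version with $p_*\mu_y=\delta_y$ and $W_2(\mu_y,\mu_{y'})=d^*(y,y')$ for all $y,y'\in X^*$. $\mathcal P(\cdot)$ denotes Borel probability measures. Relative entropy: $\mathrm{Ent}_m(\mu)=\lim_{\varepsilon\downarrow0}\int_{\{\rho>\varepsilon\}}\rho\log\rho\,dm$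 if $\mu=\rho m$, $+\infty$ otherwise. *)

theory Defs
  imports "HOL-Probability.Probability"
begin

text \<open>Metric measure space: complete separable metric space (type class polish_space),
  Borel measure with 0 < m(B_r(x)) < infinity.\<close>
definition mm_space :: "'a::metric_space measure \<Rightarrow> bool" where
  "mm_space m \<longleftrightarrow> sets m = sets borel \<and>
     (\<forall>x r. r > 0 \<longrightarrow> 0 < emeasure m (ball x r) \<and> emeasure m (ball x r) < \<infinity>)"

text \<open>Metric foliation, with the quotient space modelled by a metric space type 'b and the
  quotient map p: the leaves are the fibres of p, every point lies in a leaf (p surjective onto X*),
  and d*(p x, p y) = d(x, leaf of y). The latter encodes simultaneously the equidistance property
  d(F,F') = d(x,F') for x in F and the quotient metric d*(F,F') = d(F,F').\<close>
definition metric_foliation_quotient :: "('a::metric_space \<Rightarrow> 'b::metric_space) \<Rightarrow> bool" where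
  "metric_foliation_quotient p \<longleftrightarrow> surj p \<and>
     (\<forall>y. closed (p -` {y})) \<and>
     (\<forall>x y. dist (p x) (p y) = infdist x (p -` {p y}))"

definition quotient_measure :: "'a::topological_space measure \<Rightarrow> ('a \<Rightarrow> 'b::topological_space) \<Rightarrow> 'b measure" where
  "quotient_measure m p = distr m borel p"

definition locally_finite_measure :: "'b::metric_space measure \<Rightarrow> bool" where
  "locally_finite_measure M \<longleftrightarrow> (\<forall>y. \<exists>r>0. emeasure M (ball y r) < \<infinity>)"

definition borel_prob :: "'a::topological_space measure \<Rightarrow> bool" where
  "borel_prob \<mu> \<longleftrightarrow> prob_space \<mu> \<and> sets \<mu> = sets borel"

definition disintegration ::
  "'a::topological_space measure \<Rightarrow> ('a \<Rightarrow> 'b::topological_space) \<Rightarrow> ('b \<Rightarrow> 'a measure) \<Rightarrow> bool" where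
  "disintegration m p \<mu> \<longleftrightarrow> (\<forall>y. borel_prob (\<mu> y)) \<and>
     (\<forall>A\<in>sets borel. (\<lambda>y. emeasure (\<mu> y) A) \<in> borel_measurable borel \<and>
        emeasure m A = (\<integral>\<^sup>+ y. emeasure (\<mu> y) A \<partial>(quotient_measure m p)))"

definition couplings :: "'a::topological_space measure \<Rightarrow> 'a measure \<Rightarrow> ('a \<times> 'a) measure set" where
  "couplings \<mu> \<nu> = {\<pi>. borel_prob \<pi> \<and> distr \<pi> borel fst = \<mu> \<and> distr \<pi> borel snd = \<nu>}"

definition wasserstein2 :: "'a::metric_space measure \<Rightarrow> 'a measure \<Rightarrow> ennreal" where
  "wasserstein2 \<mu> \<nu> =
     (let c = (INF \<pi>\<in>couplings \<mu> \<nu>. \<integral>\<^sup>+ z. ennreal ((dist (fst z) (snd z))\<^sup>2) \<partial>\<pi>)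
      in if c = \<infinity> then \<infinity> else ennreal (sqrt (enn2real c)))"

definition metric_measure_foliation :: "'a::metric_space measure \<Rightarrow> ('a \<Rightarrow> 'b::metric_space) \<Rightarrow> bool" where
  "metric_measure_foliation m p \<longleftrightarrow> metric_foliation_quotient p \<and>
     locally_finite_measure (quotient_measure m p) \<and>
     (\<exists>\<mu>. disintegration m p \<mu> \<and>
        (\<exists>\<Omega>\<in>sets borel. (AE y in quotient_measure m p. y \<in> \<Omega>) \<and>
           (\<forall>y\<in>\<Omega>. \<forall>y'\<in>\<Omega>. wasserstein2 (\<mu> y) (\<mu> y') = ennreal (dist y y'))))"

definition canonical_disintegration ::
  "'a::metric_space measure \<Rightarrow> ('a \<Rightarrow> 'b::metric_space) \<Rightarrow> ('b \<Rightarrow> 'a measure) \<Rightarrow> bool" where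
  "canonical_disintegration m p \<mu> \<longleftrightarrow> disintegration m p \<mu> \<and>
     (\<forall>y. distr (\<mu> y) borel p = return borel y) \<and>
     (\<forall>y y'. wasserstein2 (\<mu> y) (\<mu> y') = ennreal (dist y y'))"

definition pullback :: "('b \<Rightarrow> 'a::topological_space measure) \<Rightarrow> 'b measure \<Rightarrow> 'a measure" where
  "pullback \<mu> \<nu> = measure_of UNIV (sets borel) (\<lambda>A. \<integral>\<^sup>+ y. emeasure (\<mu> y) A \<partial>\<nu>)"

text \<open>The integral over {rho > eps} is written as (positive part) - (negative part), as an extended real.\<close>
definition ent_trunc :: "'a measure \<Rightarrow> ('a \<Rightarrow> real) \<Rightarrow> real \<Rightarrow> ereal" where
  "ent_trunc m \<rho> \<epsilon> =
     enn2ereal (\<integral>\<^sup>+ x. ennreal (indicator {x. \<rho> x > \<epsilon>} x * max 0 (\<rho> x * ln (\<rho> x))) \<partial>m)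
   - enn2ereal (\<integral>\<^sup>+ x. ennreal (indicator {x. \<rho> x > \<epsilon>} x * max 0 (- (\<rho> x * ln (\<rho> x)))) \<partial>m)"

definition is_density_of :: "'a measure \<Rightarrow> 'a measure \<Rightarrow> ('a \<Rightarrow> real) \<Rightarrow> bool" where
  "is_density_of m \<mu> \<rho> \<longleftrightarrow> \<rho> \<in> borel_measurable m \<and> (\<forall>x. 0 \<le> \<rho> x) \<and>
     \<mu> = density m (\<lambda>x. ennreal (\<rho> x))"

definition rel_entropy :: "'a measure \<Rightarrow> 'a measure \<Rightarrow> ereal" where
  "rel_entropy m \<mu> =
     (if \<exists>\<rho>. is_density_of m \<mu> \<rho>
      then Lim (at_right 0) (ent_trunc m (SOME \<rho>. is_density_of m \<mu> \<rho>))
      else \<infinity>)"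

end

theory Submission
  imports Defs
begin

lemma fol_lip:
  assumes "metric_foliation_quotient p"
  shows "dist (p x) (p y) \<le> dist x y"
proof -
  have "dist (p x) (p y) = infdist x (p -` {p y})"
    using assms unfolding metric_foliation_quotient_def by blast
  also have "\<dots> \<le> dist x y" by (rule infdist_le) simp
  finally show ?thesis .
qed

lemma fol_meas:
  fixes p :: "'a::metric_space \<Rightarrow> 'b::metric_space"
  assumes "metric_foliation_quotient p"
  shows "p \<in> borel_measurable borel"
proof (rule borel_measurable_continuous_onI)
  show "continuous_on UNIV p"
    unfolding continuous_on_iff
    by (metis fol_lip[OF assms] le_less_trans)
qed

lemma pullback_bind:
  fixes \<mu> :: "'b::topological_space \<Rightarrow> 'a::topological_space measure"
  assumes bp: "\<And>y. borel_prob (\<mu> y)"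
    and mble: "\<And>A. A \<in> sets borel \<Longrightarrow> (\<lambda>y. emeasure (\<mu> y) A) \<in> borel_measurable borel"
    and nu: "sets \<nu> = sets borel"
  shows "pullback \<mu> \<nu> = bind \<nu> \<mu>"
    and "\<mu> \<in> measurable \<nu> (subprob_algebra borel)"
proof -
  show K: "\<mu> \<in> measurable \<nu> (subprob_algebra borel)"
  proof (rule measurable_subprob_algebra)
    fix a show "subprob_space (\<mu> a)" using bp[of a]
      by (simp add: borel_prob_def prob_space_imp_subprob_space)
    show "sets (\<mu> a) = sets borel" using bp[of a] by (simp add: borel_prob_def)
  next
    fix A :: "'a set" assume "A \<in> sets borel"
    then show "(\<lambda>a. emeasure (\<mu> a) A) \<in> borel_measurable \<nu>"
      using mble measurable_cong_sets[OF nu refl] by blast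
  qed
  have sp: "space \<nu> = UNIV" using sets_eq_imp_space_eq[OF nu] by simp
  have sb: "sets (bind \<nu> \<mu>) = sets borel"
    by (rule sets_bind) (use bp in \<open>auto simp: borel_prob_def sp\<close>)
  have "bind \<nu> \<mu> = measure_of (space (bind \<nu> \<mu>)) (sets (bind \<nu> \<mu>)) (emeasure (bind \<nu> \<mu>))"
    by (simp add: measure_of_of_measure)
  also have "\<dots> = measure_of UNIV (sets borel) (emeasure (bind \<nu> \<mu>))"
    using sb sets_eq_imp_space_eq[OF sb] by simp
  also have "\<dots> = pullback \<mu> \<nu>"
    unfolding pullback_def
  proof (rule measure_of_eq)
    show "sets borel \<subseteq> Pow UNIV" by simp
    fix a :: "'a set" assume "a \<in> sigma_sets UNIV (sets borel)"
    then have a: "a \<in> sets borel"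
      using sets.sigma_sets_eq[of "borel :: 'a measure"] by simp
    show "emeasure (bind \<nu> \<mu>) a = (\<integral>\<^sup>+ y. emeasure (\<mu> y) a \<partial>\<nu>)"
      by (rule emeasure_bind[OF _ K a]) (simp add: sp)
  qed
  finally show "pullback \<mu> \<nu> = bind \<nu> \<mu>" ..
qed

lemma sf_m:
  fixes m :: "'a::metric_space measure"
  assumes "mm_space m"
  shows "sigma_finite_measure m"
proof
  fix x0 :: 'a
  have s: "sets m = sets borel" and fin: "\<And>r. r > 0 \<Longrightarrow> emeasure m (ball x0 r) < \<infinity>"
    using assms unfolding mm_space_def by auto
  have sp: "space m = UNIV" using sets_eq_imp_space_eq[OF s] by simp
  define R where "R = range (\<lambda>n::nat. ball x0 (real (Suc n)))"
  have c1: "countable R" unfolding R_def by (rule countable_image) simp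
  have c2: "R \<subseteq> sets m"
  proof
    fix c assume "c \<in> R"
    then obtain n :: nat where "c = ball x0 (real (Suc n))" unfolding R_def by blast
    then show "c \<in> sets m" unfolding s by simp
  qed
  have "x \<in> (\<Union>n. ball x0 (real (Suc n)))" for x
  proof -
    have "\<exists>n::nat. dist x0 x < real n" using reals_Archimedean2[of "dist x0 x"] by blast
    then obtain n :: nat where "dist x0 x < real n" by blast
    then show ?thesis by (intro UN_I[of n]) auto
  qed
  then have c3: "\<Union>R = space m" unfolding R_def using sp by auto
  have c4: "\<forall>a\<in>R. emeasure m a \<noteq> \<infinity>"
  proof
    fix c assume "c \<in> R"
    then obtain n :: nat where c: "c = ball x0 (real (Suc n))" unfolding R_def by blast
    have "emeasure m c < \<infinity>" unfolding c by (rule fin) simp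
    then show "emeasure m c \<noteq> \<infinity>" by simp
  qed
  show "\<exists>A::'a set set. countable A \<and> A \<subseteq> sets m \<and> (\<Union>A) = space m \<and> (\<forall>a\<in>A. emeasure m a \<noteq> \<infinity>)"
    using c1 c2 c3 c4 by blast
qed

lemma sf_quot:
  fixes p :: "'a::polish_space \<Rightarrow> 'b::metric_space" and M :: "'b measure"
  assumes fol: "metric_foliation_quotient p" and lf: "locally_finite_measure M"
    and s: "sets M = sets borel"
  shows "sigma_finite_measure M"
proof
  have surj: "surj p" using fol unfolding metric_foliation_quotient_def by auto
  obtain D :: "'a set" where D: "countable D" "\<And>X. open X \<Longrightarrow> X \<noteq> {} \<Longrightarrow> \<exists>d\<in>D. d \<in> X"
    by (rule countable_dense_setE) blast
  have sp: "space M = UNIV" using sets_eq_imp_space_eq[OF s] by simp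
  define I where "I = {(d, q::rat). d \<in> D \<and> emeasure M (ball (p d) (real_of_rat q)) < \<infinity>}"
  define C where "C = (\<lambda>(d, q). ball (p d) (real_of_rat q)) ` I"
  show "\<exists>A::'b set set. countable A \<and> A \<subseteq> sets M \<and> (\<Union>A) = space M \<and> (\<forall>a\<in>A. emeasure M a \<noteq> \<infinity>)"
  proof (intro exI conjI)
    have "I \<subseteq> D \<times> UNIV" unfolding I_def by auto
    moreover have "countable (D \<times> (UNIV :: rat set))" using D(1) by simp
    ultimately have "countable I" by (rule countable_subset)
    then show "countable C" unfolding C_def by (rule countable_image)
    show "C \<subseteq> sets M"
    proof
      fix c assume "c \<in> C"
      then obtain d q where "c = ball (p d) (real_of_rat q)" unfolding C_def by auto
      then show "c \<in> sets M" using s by simp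
    qed
    show "\<forall>a\<in>C. emeasure M a \<noteq> \<infinity>"
    proof
      fix c assume "c \<in> C"
      then obtain d q where "(d, q) \<in> I" "c = ball (p d) (real_of_rat q)" unfolding C_def by auto
      then show "emeasure M c \<noteq> \<infinity>" unfolding I_def by auto
    qed
    have "y \<in> \<Union>C" for y
    proof -
      obtain r where r: "r > 0" "emeasure M (ball y r) < \<infinity>"
        using lf unfolding locally_finite_measure_def by blast
      obtain x where x: "p x = y" using surj by (metis surjD)
      have bne: "ball x (r/3) \<noteq> {}" using r by simp
      obtain d where d: "d \<in> D" "d \<in> ball x (r/3)"
        using D(2)[OF open_ball bne] by blast
      have r3: "r/3 < 2*r/3" using r by simp
      obtain q :: rat where q: "r/3 < real_of_rat q" "real_of_rat q < 2*r/3"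
        using of_rat_dense[OF r3] by blast
      have dx: "dist d x < r/3" using d(2) by (simp add: dist_commute)
      have dd: "dist (p d) y < r/3"
        using fol_lip[OF fol, of d x] dx unfolding x by linarith
      have sub: "ball (p d) (real_of_rat q) \<subseteq> ball y r"
      proof
        fix z assume "z \<in> ball (p d) (real_of_rat q)"
        then have "dist (p d) z < real_of_rat q" by simp
        moreover have "dist y z \<le> dist y (p d) + dist (p d) z" by (rule dist_triangle)
        ultimately show "z \<in> ball y r" using dd q by (simp add: dist_commute)
      qed
      have "emeasure M (ball (p d) (real_of_rat q)) \<le> emeasure M (ball y r)"
        by (rule emeasure_mono[OF sub]) (simp add: s)
      then have "(d, q) \<in> I" using r d unfolding I_def by auto
      moreover have "y \<in> ball (p d) (real_of_rat q)" using dd q by simp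
      ultimately show ?thesis unfolding C_def by blast
    qed
    then show "\<Union>C = space M" using sp by auto
  qed
qed

lemma ent_trunc_cong_AE:
  assumes "AE x in m. f x = g x"
  shows "ent_trunc m f e = ent_trunc m g e"
proof -
  have 1: "AE x in m. ennreal (indicator {x. e < f x} x * max 0 (f x * ln (f x))) =
            ennreal (indicator {x. e < g x} x * max 0 (g x * ln (g x)))"
    using assms by eventually_elim (simp add: indicator_def)
  have 2: "AE x in m. ennreal (indicator {x. e < f x} x * max 0 (- (f x * ln (f x)))) =
            ennreal (indicator {x. e < g x} x * max 0 (- (g x * ln (g x))))"
    using assms by eventually_elim (simp add: indicator_def)
  show ?thesis unfolding ent_trunc_def
    using nn_integral_cong_AE[OF 1] nn_integral_cong_AE[OF 2] by simp
qed

theorem proposition3p20: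
  fixes m :: "'a::polish_space measure" and p :: "'a \<Rightarrow> 'b::metric_space"
    and \<mu> :: "'b \<Rightarrow> 'a measure" and \<nu> :: "'b measure"
  assumes "mm_space m"
    and "metric_measure_foliation m p"
    and "canonical_disintegration m p \<mu>"
    and "borel_prob \<nu>"
  shows "borel_prob (pullback \<mu> \<nu>) \<and>
         distr (pullback \<mu> \<nu>) borel p = \<nu> \<and>
         (\<forall>\<rho>::'b \<Rightarrow> ennreal. \<rho> \<in> borel_measurable borel \<longrightarrow>
            \<nu> = density (quotient_measure m p) \<rho> \<longrightarrow>
            pullback \<mu> \<nu> = density m (\<rho> \<circ> p)) \<and>
         (absolutely_continuous (quotient_measure m p) \<nu> \<longrightarrow>
            rel_entropy (quotient_measure m p) \<nu> = rel_entropy m (pullback \<mu> \<nu>))"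
proof -
  have dis: "disintegration m p \<mu>" and can: "\<And>y. distr (\<mu> y) borel p = return borel y"
    using assms(3) unfolding canonical_disintegration_def by auto
  have bp: "\<And>y. borel_prob (\<mu> y)"
    and mble: "\<And>A. A \<in> sets borel \<Longrightarrow> (\<lambda>y. emeasure (\<mu> y) A) \<in> borel_measurable borel"
    and dm: "\<And>A. A \<in> sets borel \<Longrightarrow> emeasure m A = (\<integral>\<^sup>+ y. emeasure (\<mu> y) A \<partial>(quotient_measure m p))"
    using dis unfolding disintegration_def by auto
  have fol: "metric_foliation_quotient p" and lf: "locally_finite_measure (quotient_measure m p)"
    using assms(2) unfolding metric_measure_foliation_def by auto
  have pm: "p \<in> borel_measurable borel" by (rule fol_meas[OF fol])
  have msets: "sets m = sets borel" using assms(1) unfolding mm_space_def by auto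
  have pmm: "p \<in> measurable m borel" using pm measurable_cong_sets[OF msets refl] by blast
  have nus: "sets \<nu> = sets borel" and nup: "prob_space \<nu>"
    using assms(4) unfolding borel_prob_def by auto
  have nusp: "space \<nu> = UNIV" using sets_eq_imp_space_eq[OF nus] by simp
  define ms where "ms = quotient_measure m p"
  have mss: "sets ms = sets borel" by (simp add: ms_def quotient_measure_def)
  have mssp: "space ms = UNIV" using sets_eq_imp_space_eq[OF mss] by simp
  have PB: "pullback \<mu> \<nu> = bind \<nu> \<mu>" and K: "\<mu> \<in> measurable \<nu> (subprob_algebra borel)"
    using pullback_bind[OF bp mble nus] by auto
  have Kms: "\<mu> \<in> measurable ms (subprob_algebra borel)"
    using pullback_bind[OF bp mble mss] by auto
  have musets: "\<And>y. sets (\<mu> y) = sets borel"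
    using bp unfolding borel_prob_def by auto
  have musp: "\<And>y. space (\<mu> y) = UNIV"
    using sets_eq_imp_space_eq[OF musets] by simp
  have M: "m = bind ms \<mu>"
  proof (rule measure_eqI)
    show "sets m = sets (bind ms \<mu>)" using msets musets mssp by simp
    fix A assume "A \<in> sets m"
    then have A: "A \<in> sets borel" using msets by simp
    show "emeasure m A = emeasure (bind ms \<mu>) A"
    proof -
      have "emeasure (bind ms \<mu>) A = (\<integral>\<^sup>+ y. emeasure (\<mu> y) A \<partial>ms)"
        by (rule emeasure_bind[OF _ Kms A]) (simp add: mssp)
      then show ?thesis using dm[OF A, folded ms_def] by simp
    qed
  qed
  have conc: "emeasure (\<mu> y) (p -` B) = indicator B y" if B: "B \<in> sets borel" for y B
  proof -
    have pmy: "p \<in> measurable (\<mu> y) borel" using pm measurable_cong_sets[OF musets[of y] refl] by blast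
    have "emeasure (distr (\<mu> y) borel p) B = emeasure (\<mu> y) (p -` B \<inter> space (\<mu> y))"
      by (rule emeasure_distr[OF pmy B])
    then show ?thesis using can[of y] B musp by simp
  qed
  have pbsets: "sets (pullback \<mu> \<nu>) = sets borel" unfolding PB using musets nusp by simp
  have pbsp: "space (pullback \<mu> \<nu>) = UNIV" using sets_eq_imp_space_eq[OF pbsets] by simp
  have pbem: "emeasure (pullback \<mu> \<nu>) A = (\<integral>\<^sup>+ y. emeasure (\<mu> y) A \<partial>\<nu>)" if "A \<in> sets borel" for A
    unfolding PB by (rule emeasure_bind[OF _ K that]) (simp add: nusp)
  have P1: "borel_prob (pullback \<mu> \<nu>)"
    unfolding borel_prob_def
  proof (intro conjI prob_spaceI)
    have "emeasure (pullback \<mu> \<nu>) UNIV = (\<integral>\<^sup>+ y. emeasure (\<mu> y) UNIV \<partial>\<nu>)" by (rule pbem) simp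
    also have "\<dots> = (\<integral>\<^sup>+ y. 1 \<partial>\<nu>)"
      using bp musp unfolding borel_prob_def by (metis prob_space.emeasure_space_1)
    also have "\<dots> = 1" using nup prob_space.emeasure_space_1[OF nup] by (simp add: nusp)
    finally show "emeasure (pullback \<mu> \<nu>) (space (pullback \<mu> \<nu>)) = 1" by (simp add: pbsp)
  qed (rule pbsets)
  have P2: "distr (pullback \<mu> \<nu>) borel p = \<nu>"
  proof (rule measure_eqI)
    show "sets (distr (pullback \<mu> \<nu>) borel p) = sets \<nu>" using nus by simp
    fix B assume "B \<in> sets (distr (pullback \<mu> \<nu>) borel p)"
    then have B: "B \<in> sets borel" by simp
    have pmp: "p \<in> measurable (pullback \<mu> \<nu>) borel" using pm measurable_cong_sets[OF pbsets refl] by blast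
    have "emeasure (distr (pullback \<mu> \<nu>) borel p) B = emeasure (pullback \<mu> \<nu>) (p -` B)"
      using emeasure_distr[OF pmp B] pbsp by simp
    also have "\<dots> = (\<integral>\<^sup>+ y. emeasure (\<mu> y) (p -` B) \<partial>\<nu>)"
      by (rule pbem) (use B pm in \<open>simp add: measurable_sets_borel\<close>)
    also have "\<dots> = (\<integral>\<^sup>+ y. indicator B y \<partial>\<nu>)" using conc[OF B] by simp
    also have "\<dots> = emeasure \<nu> B" using B nus by simp
    finally show "emeasure (distr (pullback \<mu> \<nu>) borel p) B = emeasure \<nu> B" .
  qed
  have P3: "pullback \<mu> \<nu> = density m (\<rho> \<circ> p)"
    if \<rho>m: "\<rho> \<in> borel_measurable borel" and nud: "\<nu> = density (quotient_measure m p) \<rho>"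
    for \<rho> :: "'b \<Rightarrow> ennreal"
  proof (rule measure_eqI)
    show "sets (pullback \<mu> \<nu>) = sets (density m (\<rho> \<circ> p))" using pbsets msets by simp
    fix A assume "A \<in> sets (pullback \<mu> \<nu>)"
    then have A: "A \<in> sets borel" using pbsets by simp
    have \<rho>ms: "\<rho> \<in> borel_measurable ms" using \<rho>m measurable_cong_sets[OF mss refl] by blast
    have inner: "(\<integral>\<^sup>+ x. \<rho> (p x) * indicator A x \<partial>\<mu> y) = \<rho> y * emeasure (\<mu> y) A" for y
    proof -
      have ae: "AE x in \<mu> y. p x = y"
      proof (rule AE_I[where N="p -` (- {y})"])
        show "{x \<in> space (\<mu> y). \<not> p x = y} \<subseteq> p -` (- {y})" by auto
        show "emeasure (\<mu> y) (p -` (- {y})) = 0" using conc[of "- {y}" y] by simp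
        show "p -` (- {y}) \<in> sets (\<mu> y)" using pm musets[of y]
          by (simp add: measurable_sets_borel)
      qed
      have "(\<integral>\<^sup>+ x. \<rho> (p x) * indicator A x \<partial>\<mu> y) = (\<integral>\<^sup>+ x. \<rho> y * indicator A x \<partial>\<mu> y)"
        by (rule nn_integral_cong_AE) (use ae in auto)
      also have "\<dots> = \<rho> y * emeasure (\<mu> y) A"
        by (rule nn_integral_cmult_indicator) (simp add: musets A)
      finally show ?thesis .
    qed
    have fm: "(\<lambda>x. \<rho> (p x) * indicator A x) \<in> borel_measurable borel"
      using \<rho>m pm A by measurable
    have "emeasure (pullback \<mu> \<nu>) A = (\<integral>\<^sup>+ y. emeasure (\<mu> y) A \<partial>density ms \<rho>)"
      using pbem[OF A] nud by (simp add: ms_def)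
    also have "\<dots> = (\<integral>\<^sup>+ y. \<rho> y * emeasure (\<mu> y) A \<partial>ms)"
      by (rule nn_integral_density[OF \<rho>ms]) (use mble[OF A] measurable_cong_sets[OF mss refl] in blast)
    also have "\<dots> = (\<integral>\<^sup>+ y. (\<integral>\<^sup>+ x. \<rho> (p x) * indicator A x \<partial>\<mu> y) \<partial>ms)"
      using inner by simp
    also have "\<dots> = (\<integral>\<^sup>+ x. \<rho> (p x) * indicator A x \<partial>bind ms \<mu>)"
      by (rule nn_integral_bind[OF fm Kms, symmetric])
    also have "\<dots> = emeasure (density m (\<rho> \<circ> p)) A"
      using M[symmetric] msets A
      by (simp add: emeasure_density pmm \<rho>m measurable_comp[OF pmm \<rho>m])
    finally show "emeasure (pullback \<mu> \<nu>) A = emeasure (density m (\<rho> \<circ> p)) A" .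
  qed
  have P4: "rel_entropy ms \<nu> = rel_entropy m (pullback \<mu> \<nu>)"
    if ac: "absolutely_continuous ms \<nu>"
  proof -
    interpret S: sigma_finite_measure ms
      by (rule sf_quot[OF fol lf[folded ms_def] mss])
    interpret Sm: sigma_finite_measure m by (rule sf_m[OF assms(1)])
    have nums: "sets \<nu> = sets ms" using nus mss by simp
    define f where "f = RN_deriv ms \<nu>"
    have fm: "f \<in> borel_measurable ms" unfolding f_def by simp
    have df: "density ms f = \<nu>" unfolding f_def by (rule S.density_RN_deriv[OF ac nums])
    have ffin: "AE y in ms. f y \<noteq> \<infinity>" unfolding f_def
      by (rule S.RN_deriv_finite[OF prob_space_imp_sigma_finite[OF nup] ac nums])
    have ex1: "\<exists>\<rho>. is_density_of ms \<nu> \<rho>"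
    proof (intro exI)
      show "is_density_of ms \<nu> (\<lambda>y. enn2real (f y))"
        unfolding is_density_of_def
      proof (intro conjI allI)
        show "(\<lambda>y. enn2real (f y)) \<in> borel_measurable ms" using fm by measurable
        show "\<And>x. 0 \<le> enn2real (f x)" by simp
        have "density ms (\<lambda>y. ennreal (enn2real (f y))) = density ms f"
          by (rule density_cong) (use fm ffin in \<open>auto simp: less_top\<close>)
        then show "\<nu> = density ms (\<lambda>y. ennreal (enn2real (f y)))" using df by simp
      qed
    qed
    define r where "r = (SOME \<rho>. is_density_of ms \<nu> \<rho>)"
    have r: "is_density_of ms \<nu> r" unfolding r_def by (rule someI_ex[OF ex1])
    have rm: "r \<in> borel_measurable borel" and rnn: "\<And>y. 0 \<le> r y"
      and rd: "\<nu> = density ms (\<lambda>y. ennreal (r y))"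
      using r measurable_cong_sets[OF mss refl] unfolding is_density_of_def by auto
    have rpm: "(\<lambda>x. r (p x)) \<in> borel_measurable m" using measurable_comp[OF pmm rm] by (simp add: comp_def)
    have pbd: "pullback \<mu> \<nu> = density m (\<lambda>x. ennreal (r (p x)))"
      using P3[of "\<lambda>y. ennreal (r y)"] rm rd by (simp add: ms_def comp_def)
    have ex2: "\<exists>\<rho>. is_density_of m (pullback \<mu> \<nu>) \<rho>"
      using rpm rnn pbd unfolding is_density_of_def by blast
    define s where "s = (SOME \<rho>. is_density_of m (pullback \<mu> \<nu>) \<rho>)"
    have sd: "is_density_of m (pullback \<mu> \<nu>) s" unfolding s_def by (rule someI_ex[OF ex2])
    have sm: "s \<in> borel_measurable m" and snn: "\<And>x. 0 \<le> s x"
      and sdd: "pullback \<mu> \<nu> = density m (\<lambda>x. ennreal (s x))"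
      using sd unfolding is_density_of_def by auto
    have "AE x in m. ennreal (s x) = ennreal (r (p x))"
      by (rule Sm.density_unique) (use sm rpm sdd pbd in auto)
    then have ae: "AE x in m. s x = r (p x)" using snn rnn by auto
    have eq: "ent_trunc m s = ent_trunc ms r"
    proof
      fix \<epsilon> :: real
      have e1: "ent_trunc m s \<epsilon> = ent_trunc m (\<lambda>x. r (p x)) \<epsilon>"
        by (rule ent_trunc_cong_AE[OF ae])
      have e2: "(\<integral>\<^sup>+ x. g (r (p x)) \<partial>m) = (\<integral>\<^sup>+ y. g (r y) \<partial>ms)"
        if g: "g \<in> borel_measurable borel" for g :: "real \<Rightarrow> ennreal"
      proof -
        have "(\<lambda>y. g (r y)) \<in> borel_measurable (distr m borel p)"
          using measurable_comp[OF rm g] by (simp add: comp_def)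
        then show ?thesis
          unfolding ms_def quotient_measure_def by (rule nn_integral_distr[OF pmm, symmetric])
      qed
      have g1: "(\<lambda>t. ennreal (indicator {t. t > \<epsilon>} t * max 0 (t * ln t))) \<in> borel_measurable borel"
        by measurable
      have g2: "(\<lambda>t. ennreal (indicator {t. t > \<epsilon>} t * max 0 (- (t * ln t)))) \<in> borel_measurable borel"
        by measurable
      have e3: "ent_trunc m (\<lambda>x. r (p x)) \<epsilon> = ent_trunc ms r \<epsilon>"
        unfolding ent_trunc_def
        using e2[OF g1] e2[OF g2] by (simp add: indicator_def)
      show "ent_trunc m s \<epsilon> = ent_trunc ms r \<epsilon>" using e1 e3 by simp
    qed
    show ?thesis unfolding rel_entropy_def using ex1 ex2 eq
      by (simp add: r_def[symmetric] s_def[symmetric])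
  qed
  have P3': "\<forall>\<rho>::'b \<Rightarrow> ennreal. \<rho> \<in> borel_measurable borel \<longrightarrow>
            \<nu> = density (quotient_measure m p) \<rho> \<longrightarrow>
            pullback \<mu> \<nu> = density m (\<rho> \<circ> p)"
    using P3 by (intro allI impI)
  have P4': "absolutely_continuous (quotient_measure m p) \<nu> \<longrightarrow>
            rel_entropy (quotient_measure m p) \<nu> = rel_entropy m (pullback \<mu> \<nu>)"
    using P4 unfolding ms_def by (rule impI)
  show ?thesis using P1 P2 P3' P4' by (intro conjI)
qed

end
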